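(* Let $s\ge1$ be an integer, $\Sigma_*=\{-s,\dots,-1,1,\dots,s\}$, and for $n\ge0$ let $T_n\subseteq\Sigma_*^n$ be the set of strings $t_1\cdots t_n$ such that there is no index $j$ with $t_j=m\in\{1,\dots,s\}$ and $t_{j+1}=-m$ (with $T_0$ consisting of the empty string). Then $|T_0|=1$, $|T_1|=2s$, and $|T_{n+2}|=2s|T_{n+1}|-s|T_n|$ for all $n\ge0$. Moreover, for $s\ge2$, $$|T_n|=\frac{s^n}{2\sqrt{1-1/s}}\left\{\left(1+\sqrt{1-1/s}\right)^{n+1}-\left(1-\sqrt{1-1/s}\right)^{n+1}\right\},$$ and asymptotically $|T_n|\approx\frac{1+\sqrt{1-1/s}}{2\sqrt{1-1/s}}\left[s\left(1+\sqrt{1-1/s}\right)\right]^n$, in the sense that the ratio of the two sides tends to $1$ as $n\to\infty$. *)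

theory Defs
  imports "HOL-Analysis.Analysis"
begin

definition Sigma_star :: "nat \<Rightarrow> int set" where
  "Sigma_star s = {-int s..-1} \<union> {1..int s}"

definition T_strings :: "nat \<Rightarrow> nat \<Rightarrow> int list set" where
  "T_strings s n = {t. length t = n \<and> set t \<subseteq> Sigma_star s \<and>
     \<not> (\<exists>j. j + 1 < n \<and> t ! j \<in> {1..int s} \<and> t ! (j+1) = - (t ! j))}"

end

theory Submission
  imports Defs
begin

fun okw :: "int \<Rightarrow> int list \<Rightarrow> bool" where
  "okw S [] = True"
| "okw S [x] = True"
| "okw S (x#y#t) = (\<not>(1 \<le> x \<and> x \<le> S \<and> y = -x) \<and> okw S (y#t))"

lemma okw_iff: "(\<not>(\<exists>j. j+1 < length t \<and> t!j \<in> {1..S} \<and> t!(j+1) = -(t!j))) = okw S t"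
proof (induction S t rule: okw.induct)
  case (3 S x y t)
  have "(\<exists>j. j+1 < length (x#y#t) \<and> (x#y#t)!j \<in> {1..S} \<and> (x#y#t)!(j+1) = -((x#y#t)!j))
     = ((1 \<le> x \<and> x \<le> S \<and> y = -x) \<or> (\<exists>j. j+1 < length (y#t) \<and> (y#t)!j \<in> {1..S} \<and> (y#t)!(j+1) = -((y#t)!j)))"
    (is "?L = ?R")
  proof
    assume ?L then obtain j where j: "j+1 < length (x#y#t)" "(x#y#t)!j \<in> {1..S}" "(x#y#t)!(j+1) = -((x#y#t)!j)" by blast
    show ?R
    proof (cases j)
      case 0 then show ?thesis using j by auto
    next
      case (Suc k) then show ?thesis using j by (intro disjI2 exI[of _ k]) auto
    qed
  next
    assume ?R then show ?L
    proof
      assume "1 \<le> x \<and> x \<le> S \<and> y = -x" then show ?L by (intro exI[of _ 0]) auto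
    next
      assume "\<exists>j. j+1 < length (y#t) \<and> (y#t)!j \<in> {1..S} \<and> (y#t)!(j+1) = -((y#t)!j)"
      then obtain j where "j+1 < length (y#t) \<and> (y#t)!j \<in> {1..S} \<and> (y#t)!(j+1) = -((y#t)!j)" by blast
      then show ?L by (intro exI[of _ "Suc j"]) auto
    qed
  qed
  then show ?case using 3 by auto
next
  case (2 S x) then show ?case by auto
qed auto

lemma T_alt: "T_strings s n = {t. length t = n \<and> set t \<subseteq> Sigma_star s \<and> okw (int s) t}"
  unfolding T_strings_def using okw_iff[of _ "int s"] by blast

lemma finite_T: "finite (T_strings s n)"
proof -
  have "finite (Sigma_star s)" unfolding Sigma_star_def by auto
  then have "finite {t. set t \<subseteq> Sigma_star s \<and> length t = n}" by (rule finite_lists_length_eq)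
  then show ?thesis unfolding T_alt by (rule finite_subset[rotated]) auto
qed

lemma card_Sigma: "card (Sigma_star s) = 2 * s"
proof -
  have "card (Sigma_star s) = card {-int s..-1} + card {1..int s}"
    unfolding Sigma_star_def by (rule card_Un_disjoint) auto
  then show ?thesis by simp
qed

lemma T0: "T_strings s 0 = {[]}" unfolding T_alt by auto
lemma T1: "T_strings s 1 = (\<lambda>x. [x]) ` Sigma_star s" unfolding T_alt
  by (auto simp: length_Suc_conv)

lemma rec_nat: "card (T_strings s (n+2)) + s * card (T_strings s n) = 2 * s * card (T_strings s (n+1))"
proof -
  define A where "A = T_strings s (n+2)"
  define B where "B = (\<lambda>(x,u). x # (-x) # u) ` ({1..int s} \<times> T_strings s n)"
  define C where "C = (\<lambda>(x,t). x # t) ` (Sigma_star s \<times> T_strings s (n+1))"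
  have cC: "card C = 2 * s * card (T_strings s (n+1))"
    unfolding C_def by (subst card_image) (auto simp: inj_on_def card_cartesian_product card_Sigma)
  have cB: "card B = s * card (T_strings s n)"
    unfolding B_def by (subst card_image) (auto simp: inj_on_def card_cartesian_product)
  have fC: "finite C" unfolding C_def using finite_T
    by (auto simp: Sigma_star_def)
  have U: "C = A \<union> B"
  proof
    show "C \<subseteq> A \<union> B"
    proof
      fix z assume "z \<in> C"
      then obtain x t where z: "z = x # t" "x \<in> Sigma_star s" "t \<in> T_strings s (n+1)"
        unfolding C_def by auto
      then obtain y u where t: "t = y # u" unfolding T_alt by (cases t) auto
      show "z \<in> A \<union> B"
      proof (cases "1 \<le> x \<and> x \<le> int s \<and> y = -x")
        case True
        then have "u \<in> T_strings s n" using z t unfolding T_alt by (cases u) auto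
        then show ?thesis using True z t unfolding B_def by auto
      next
        case False
        then show ?thesis using z t unfolding A_def T_alt by auto
      qed
    qed
  next
    show "A \<union> B \<subseteq> C"
    proof
      fix z assume "z \<in> A \<union> B"
      then show "z \<in> C"
      proof
        assume "z \<in> A"
        then obtain x t where "z = x # t" "x \<in> Sigma_star s" "t \<in> T_strings s (n+1)"
          unfolding A_def T_alt by (cases z; cases "tl z") auto
        then show ?thesis unfolding C_def by auto
      next
        assume "z \<in> B"
        then obtain x u where xu: "z = x # (-x) # u" "x \<in> {1..int s}" "u \<in> T_strings s n"
          unfolding B_def by auto
        have "-x # u \<in> T_strings s (n+1)" using xu unfolding T_alt
          by (cases u) (auto simp: Sigma_star_def)
        moreover have "x \<in> Sigma_star s" using xu by (auto simp: Sigma_star_def)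
        ultimately show ?thesis unfolding C_def using xu by auto
      qed
    qed
  qed
  have D: "A \<inter> B = {}" unfolding A_def B_def T_alt by auto
  have "card C = card A + card B" using U D fC by (simp add: card_Un_disjoint)
  then show ?thesis using cB cC A_def by simp
qed


lemma rec_real: "real (card (T_strings s (n+2)))
   = 2 * real s * real (card (T_strings s (n+1))) - real s * real (card (T_strings s n))"
proof -
  have "real (card (T_strings s (n+2)) + s * card (T_strings s n)) = real (2 * s * card (T_strings s (n+1)))"
    using rec_nat by metis
  then show ?thesis by simp
qed

lemma closed:
  fixes s :: nat and r :: real
  assumes s2: "s \<ge> 2" and r: "r = sqrt (1 - 1 / real s)"
  shows "real (card (T_strings s n)) =
           real s ^ n / (2 * r) * ((1 + r) ^ (n+1) - (1 - r) ^ (n+1))"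
proof -
  have sp: "real s > 0" using s2 by simp
  have r2: "r^2 = 1 - 1 / real s" unfolding r using s2 by (simp add: field_simps)
  have rpos: "r > 0" unfolding r using s2 by (simp add: field_simps)
  define g where "g n = real s ^ n / (2 * r) * ((1 + r) ^ (n+1) - (1 - r) ^ (n+1))" for n
  have key: "real s * q^2 - 2 * real s * q + 1 = 0" if "q = 1 + r \<or> q = 1 - r" for q
  proof -
    have "real s * q^2 - 2 * real s * q + 1 = real s * (r^2 - 1) + 1" using that
    proof
      assume "q = 1 + r" then show ?thesis by (simp add: power2_eq_square algebra_simps)
    next
      assume q: "q = 1 - r"
      have "real s * (1 - r)^2 - 2 * real s * (1 - r) + 1 = real s * (r^2 - 1) + 1"
        by (simp add: power2_eq_square algebra_simps)
      then show ?thesis unfolding q .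
    qed
    also have "\<dots> = 0" using r2 sp by (simp add: field_simps)
    finally show ?thesis .
  qed
  have grec: "g (n+2) = 2 * real s * g (n+1) - real s * g n" for n
  proof -
    have e: "real s ^ (n+2) * q ^ (n+3) - 2 * real s * (real s ^ (n+1) * q ^ (n+2)) + real s * (real s ^ n * q^(n+1))
          = real s ^ (n+1) * q ^ (n+1) * (real s * q^2 - 2 * real s * q + 1)" for q :: real
      by (simp add: power_add power2_eq_square power3_eq_cube algebra_simps)
    have "g (n+2) - 2 * real s * g (n+1) + real s * g n =
      ((real s ^ (n+2) * (1+r) ^ (n+3) - 2 * real s * (real s ^ (n+1) * (1+r) ^ (n+2)) + real s * (real s ^ n * (1+r)^(n+1)))
      - (real s ^ (n+2) * (1-r) ^ (n+3) - 2 * real s * (real s ^ (n+1) * (1-r) ^ (n+2)) + real s * (real s ^ n * (1-r)^(n+1)))) / (2*r)"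
    proof -
      have h: "g m = (real s ^ m * ((1 + r) ^ (m+1) - (1 - r) ^ (m+1))) / (2*r)" for m
        unfolding g_def by simp
      have a1: "n+2+1 = n+3" "n+1+1 = n+2" by simp_all
      show ?thesis unfolding h a1 by (simp add: diff_divide_distrib add_divide_distrib algebra_simps)
    qed
    also have "\<dots> = 0" unfolding e using key by simp
    finally show ?thesis by simp
  qed
  have g0: "g 0 = 1" unfolding g_def using rpos by simp
  have g1: "g 1 = 2 * real s"
  proof -
    have "g 1 = real s / (2*r) * (4 * r)" unfolding g_def by (simp add: power2_eq_square algebra_simps)
    then show ?thesis using rpos by simp
  qed
  have "real (card (T_strings s n)) = g n \<and> real (card (T_strings s (n+1))) = g (n+1)"
  proof (induction n)
    case 0 then show ?case using g0 g1 T0 T1 card_Sigma[of s] by (simp add: card_image inj_on_def)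
  next
    case (Suc n) then show ?case using grec[of n] rec_real[of s n] by simp
  qed
  then show ?thesis unfolding g_def by simp
qed

theorem lemma7:
  fixes s :: nat
  assumes "s \<ge> 1"
  shows "card (T_strings s 0) = 1
    \<and> card (T_strings s 1) = 2 * s
    \<and> (\<forall>n. real (card (T_strings s (n+2)))
           = 2 * real s * real (card (T_strings s (n+1))) - real s * real (card (T_strings s n)))
    \<and> (s \<ge> 2 \<longrightarrow>
        (\<forall>n. real (card (T_strings s n)) =
           real s ^ n / (2 * sqrt (1 - 1 / real s)) *
           ((1 + sqrt (1 - 1 / real s)) ^ (n+1) - (1 - sqrt (1 - 1 / real s)) ^ (n+1)))
        \<and> ((\<lambda>n. real (card (T_strings s n)) /
              ((1 + sqrt (1 - 1 / real s)) / (2 * sqrt (1 - 1 / real s)) *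
               (real s * (1 + sqrt (1 - 1 / real s))) ^ n)) \<longlonglongrightarrow> 1))"
proof (intro conjI allI impI)
  show "card (T_strings s 0) = 1" using T0 by simp
  show "card (T_strings s 1) = 2 * s" using T1 card_Sigma[of s] by (simp add: card_image inj_on_def)
  show "real (card (T_strings s (n+2)))
           = 2 * real s * real (card (T_strings s (n+1))) - real s * real (card (T_strings s n))" for n
    by (rule rec_real)
  assume s2: "s \<ge> 2"
  define r where "r = sqrt (1 - 1 / real s)"
  show "real (card (T_strings s n)) =
           real s ^ n / (2 * sqrt (1 - 1 / real s)) *
           ((1 + sqrt (1 - 1 / real s)) ^ (n+1) - (1 - sqrt (1 - 1 / real s)) ^ (n+1))" for n
    using closed[OF s2 refl] .
  have sp: "real s > 0" using s2 by simp
  have rpos: "r > 0" unfolding r_def using s2 by (simp add: field_simps)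
  have rle: "r \<le> 1" unfolding r_def using s2 by simp
  define q where "q = (1 - r) / (1 + r)"
  have q: "norm q < 1" unfolding q_def using rpos rle by (simp add: field_simps)
  have eq: "real (card (T_strings s n)) /
              ((1 + r) / (2 * r) * (real s * (1 + r)) ^ n) = 1 - q ^ (n+1)" for n
  proof -
    have C: "real (card (T_strings s n)) = real s ^ n / (2 * r) * ((1 + r) ^ (n+1) - (1 - r) ^ (n+1))"
      using closed[OF s2 r_def] .
    have P: "(1+r)^(n+1) > 0" using rpos by simp
    define D where "D = (1 + r) / (2 * r) * (real s * (1 + r)) ^ n"
    have Dp: "D > 0" unfolding D_def using rpos sp by simp
    have qn: "q^(n+1) = (1-r)^(n+1) / (1+r)^(n+1)" unfolding q_def by (simp add: power_divide)
    have DD: "D = real s ^ n / (2 * r) * (1+r)^(n+1)"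
      unfolding D_def power_mult_distrib using rpos by (simp add: field_simps)
    have "D * (1 - q^(n+1)) = D - D * ((1-r)^(n+1) / (1+r)^(n+1))" unfolding qn by (simp add: algebra_simps)
    also have "D * ((1-r)^(n+1) / (1+r)^(n+1)) = real s ^ n / (2 * r) * (1-r)^(n+1)"
      unfolding DD using P rpos by simp
    finally have F: "D * (1 - q^(n+1)) = D - real s ^ n / (2 * r) * (1-r)^(n+1)" .
    have "D * (1 - q^(n+1)) = real s ^ n / (2 * r) * ((1 + r) ^ (n+1) - (1 - r) ^ (n+1))"
      unfolding F by (subst DD) (simp add: right_diff_distrib)
    with C have "real (card (T_strings s n)) = D * (1 - q^(n+1))" by simp
    then show ?thesis using Dp unfolding D_def[symmetric] by simp
  qed
  have "(\<lambda>n. q ^ Suc n) \<longlonglongrightarrow> 0"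
    using LIMSEQ_Suc[OF LIMSEQ_power_zero[OF q]] .
  then have "(\<lambda>n. 1 - q ^ (n+1)) \<longlonglongrightarrow> 1 - 0"
    by (intro tendsto_diff tendsto_const) simp
  then show "(\<lambda>n. real (card (T_strings s n)) /
              ((1 + sqrt (1 - 1 / real s)) / (2 * sqrt (1 - 1 / real s)) *
               (real s * (1 + sqrt (1 - 1 / real s))) ^ n)) \<longlonglongrightarrow> 1"
    using eq unfolding r_def by simp
qed

end
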